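(* Let $t\geq 2$ and $n\geq 1$ be integers and let $\mathcal{F}\subseteq[t]^n$ be a family for which every coordinate $i\in[n]$ is separating. Then $|\mathcal{F}|=\Omega(\sqrt{n})$.
   Context: For positive integers $n,t$, $[n]=\{1,\dots,n\}$ and $[t]^n$ is the set of functions $f:[n]\to[t]$, partially ordered by $f\leq g$ iff $f(i)\leq g(i)$ for all $i$. For $f\in[t]^n$ and $i\in[n]$, $D_i(f)\in[t]^{n-1}$ is the function obtained by deleting coordinate $i$: $D_i(f)(x)=f(x)$ for $1\leq x<i$ and $D_i(f)(x)=f(x+1)$ for $i\leq x\leq n-1$. A coordinate $i\in[n]$ is separating for $\mathcal{F}\subseteq[t]^n$ if there exist distinct $f,f'\in\mathcal{F}$ with $D_i(f)\leq D_i(f')$ and $f(i)>f'(i)$. *)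

theory Defs
  imports Complex_Main
begin

text \<open>The grid [t]^n: functions [n] -> [t], represented as functions nat => nat
  that take values in {1..t} on {1..n} and are 0 outside {1..n} (canonical representative).\<close>
definition cube :: "nat \<Rightarrow> nat \<Rightarrow> (nat \<Rightarrow> nat) set" where
  "cube t n = {f. (\<forall>i. 1 \<le> i \<and> i \<le> n \<longrightarrow> 1 \<le> f i \<and> f i \<le> t)
                 \<and> (\<forall>i. \<not> (1 \<le> i \<and> i \<le> n) \<longrightarrow> f i = 0)}"

definition le_on :: "nat \<Rightarrow> (nat \<Rightarrow> nat) \<Rightarrow> (nat \<Rightarrow> nat) \<Rightarrow> bool" where
  "le_on m f g \<longleftrightarrow> (\<forall>x. 1 \<le> x \<and> x \<le> m \<longrightarrow> f x \<le> g x)"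

definition del_coord :: "nat \<Rightarrow> nat \<Rightarrow> (nat \<Rightarrow> nat) \<Rightarrow> (nat \<Rightarrow> nat)" where
  "del_coord n i f = (\<lambda>x. if 1 \<le> x \<and> x < i then f x
                          else if i \<le> x \<and> x \<le> n - 1 \<and> 1 \<le> x then f (x + 1) else 0)"

definition separating :: "nat \<Rightarrow> (nat \<Rightarrow> nat) set \<Rightarrow> nat \<Rightarrow> bool" where
  "separating n F i \<longleftrightarrow> (\<exists>f\<in>F. \<exists>f'\<in>F. f \<noteq> f' \<and>
      le_on (n - 1) (del_coord n i f) (del_coord n i f') \<and> f i > f' i)"

end

theory Submission
  imports Defs
begin

lemma cube_finite: "finite (cube t n)"
proof -
  have "cube t n \<subseteq> {f. \<forall>x. (x \<in> {1..n} \<longrightarrow> f x \<in> {1..t}) \<and> (x \<notin> {1..n} \<longrightarrow> f x = 0)}"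
    unfolding cube_def by auto
  moreover have "finite {f. \<forall>x. (x \<in> {1..n} \<longrightarrow> f x \<in> {1..t}) \<and> (x \<notin> {1..n} \<longrightarrow> f x = (0::nat))}"
    by (rule finite_set_of_finite_funs) auto
  ultimately show ?thesis by (rule finite_subset)
qed

lemma sep_le:
  assumes "le_on (n - 1) (del_coord n i f) (del_coord n i f')" "1 \<le> y" "y \<le> n" "y \<noteq> i" "i \<le> n" "1 \<le> i"
  shows "f y \<le> f' y"
proof (cases "y < i")
  case True
  then have "1 \<le> y \<and> y \<le> n - 1" using assms by auto
  then have "del_coord n i f y \<le> del_coord n i f' y" using assms(1) unfolding le_on_def by blast
  then show ?thesis using True \<open>1 \<le> y \<and> y \<le> n - 1\<close> unfolding del_coord_def by simp
next
  case False
  then have "i < y" using assms by auto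
  then have "1 \<le> y - 1 \<and> y - 1 \<le> n - 1 \<and> \<not> (y - 1 < i) \<and> i \<le> y - 1" using assms by auto
  then have "del_coord n i f (y-1) \<le> del_coord n i f' (y-1)" using assms(1) unfolding le_on_def by blast
  then show ?thesis using \<open>1 \<le> y - 1 \<and> y - 1 \<le> n - 1 \<and> \<not> (y - 1 < i) \<and> i \<le> y - 1\<close> \<open>i < y\<close>
    unfolding del_coord_def by auto
qed

theorem mainTheorem8:
  "\<exists>c::real. c > 0 \<and>
     (\<forall>t n :: nat. \<forall>F. t \<ge> 2 \<longrightarrow> n \<ge> 1 \<longrightarrow> F \<subseteq> cube t n \<longrightarrow>
        (\<forall>i. 1 \<le> i \<and> i \<le> n \<longrightarrow> separating n F i) \<longrightarrow>
        real (card F) \<ge> c * sqrt (real n))"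
proof (intro exI[of _ 1] conjI allI impI)
  fix t n :: nat and F :: "(nat \<Rightarrow> nat) set"
  assume n: "n \<ge> 1" and F: "F \<subseteq> cube t n" and sep: "\<forall>i. 1 \<le> i \<and> i \<le> n \<longrightarrow> separating n F i"
  have fin: "finite F" using F cube_finite finite_subset by blast
  define P where "P = (\<lambda>i p. fst p \<in> F \<and> snd p \<in> F \<and>
      le_on (n - 1) (del_coord n i (fst p)) (del_coord n i (snd p)) \<and> fst p i > snd p i)"
  define w where "w = (\<lambda>i. SOME p. P i p)"
  have wP: "P i (w i)" if "i \<in> {1..n}" for i
  proof -
    have "\<exists>p. P i p" using sep that unfolding separating_def P_def by force
    then show ?thesis unfolding w_def by (rule someI_ex)
  qed
  have inj: "inj_on w {1..n}"
  proof (rule inj_onI)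
    fix i j assume i: "i \<in> {1..n}" and j: "j \<in> {1..n}" and e: "w i = w j"
    show "i = j"
    proof (rule ccontr)
      assume "i \<noteq> j"
      have "le_on (n - 1) (del_coord n i (fst (w i))) (del_coord n i (snd (w i)))"
        using wP[OF i] unfolding P_def by blast
      moreover have "1 \<le> j" "j \<le> n" "i \<le> n" "1 \<le> i" using i j by auto
      ultimately have A: "fst (w i) j \<le> snd (w i) j"
        using \<open>i \<noteq> j\<close> sep_le[where i=i and n=n and y=j] by blast
      have B: "fst (w j) j > snd (w j) j" using wP[OF j] unfolding P_def by blast
      show False using A B e by (metis not_le)
    qed
  qed
  have sub: "w ` {1..n} \<subseteq> F \<times> F"
  proof
    fix p assume "p \<in> w ` {1..n}"
    then obtain i where "i \<in> {1..n}" "p = w i" by blast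
    then show "p \<in> F \<times> F" using wP[of i] unfolding P_def by (metis mem_Times_iff)
  qed
  have "n \<le> card (F \<times> F)"
    using card_inj_on_le[OF inj sub] fin by simp
  then have "n \<le> card F * card F" by (simp add: card_cartesian_product)
  then have "real n \<le> (real (card F))^2" by (metis of_nat_le_iff of_nat_mult power2_eq_square)
  then have "sqrt (real n) \<le> real (card F)" using real_sqrt_le_mono[of "real n" "(real (card F))^2"] by simp
  then show "1 * sqrt (real n) \<le> real (card F)" by simp
qed (simp)

end
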